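(* Let $n\ge1$ and let $\bar F:\mathbb{R}^n\to[0,\infty)$ be a Finsler norm. Write $\|\vec v\|=\bar F(\vec v)$ and $\bar g_{\vec v}(\vec v,\vec w)=\frac12\frac{\partial^2\bar F^2}{\partial v^\alpha\partial v^\beta}(\vec v)\,v^\alpha w^\beta$ for $\vec v\ne0$, with $\bar g_{\vec 0}(\vec 0,\vec w):=0$. Then for all $v^0,w^0>0$ and all $\vec v,\vec w\in\mathbb{R}^n$ with $(v^0)^2-\|\vec v\|^2>0$ and $(w^0)^2-\|\vec w\|^2>0$, $$\big[v^0w^0-\bar g_{\vec v}(\vec v,\vec w)\big]^2-\big[(v^0)^2-\|\vec v\|^2\big]\big[(w^0)^2-\|\vec w\|^2\big]\ge0.$$
   Context: A Finsler norm on $\mathbb{R}^n$ is a function $\bar F:\mathbb{R}^n\to[0,\infty)$ that is smooth on $\mathbb{R}^n\setminus\{0\}$, continuous at $0$, positively homogeneous of degree 1 ($\bar F(\lambda x)=\lambda\bar F(x)$ for $\lambda>0$), and such that for every $x\neq0$ the matrix $\frac12\frac{\partial^2\bar F^2}{\partial x^\alpha\partial x^\beta}(x)$ is positive definite. Greek indices run over $1,\dots,n$, with summation over repeated indices. *)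

theory Defs
  imports "HOL-Analysis.Analysis"
begin

definition pderiv_at :: "('n::finite) \<Rightarrow> (real^'n \<Rightarrow> real) \<Rightarrow> real^'n \<Rightarrow> real" where
  "pderiv_at i f x = frechet_derivative f (at x) (axis i 1)"

fun Ck_on :: "nat \<Rightarrow> (real^'n::finite) set \<Rightarrow> (real^'n \<Rightarrow> real) \<Rightarrow> bool" where
  "Ck_on 0 S f = continuous_on S f"
| "Ck_on (Suc k) S f = ((\<forall>x\<in>S. f differentiable (at x)) \<and> continuous_on S f \<and>
      (\<forall>i. Ck_on k S (\<lambda>x. pderiv_at i f x)))"

definition smooth_on :: "(real^'n::finite) set \<Rightarrow> (real^'n \<Rightarrow> real) \<Rightarrow> bool" where
  "smooth_on S f = (\<forall>k. Ck_on k S f)"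

definition fund_tensor :: "(real^'n::finite \<Rightarrow> real) \<Rightarrow> real^'n \<Rightarrow> 'n \<Rightarrow> 'n \<Rightarrow> real" where
  "fund_tensor F x \<alpha> \<beta> = (1/2) * pderiv_at \<beta> (pderiv_at \<alpha> (\<lambda>y. (F y)^2)) x"

definition finsler_norm :: "(real^'n::finite \<Rightarrow> real) \<Rightarrow> bool" where
  "finsler_norm F \<longleftrightarrow>
     (\<forall>x. F x \<ge> 0) \<and>
     smooth_on (- {0}) F \<and>
     isCont F 0 \<and>
     (\<forall>c>0. \<forall>x. F (c *\<^sub>R x) = c * F x) \<and>
     (\<forall>x. x \<noteq> 0 \<longrightarrow> (\<forall>\<xi>. \<xi> \<noteq> 0 \<longrightarrow>
        (\<Sum>\<alpha>\<in>UNIV. \<Sum>\<beta>\<in>UNIV. fund_tensor F x \<alpha> \<beta> * \<xi>$\<alpha> * \<xi>$\<beta>) > 0))"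

definition gbar :: "(real^'n::finite \<Rightarrow> real) \<Rightarrow> real^'n \<Rightarrow> real^'n \<Rightarrow> real" where
  "gbar F v w = (if v = 0 then 0 else
      (\<Sum>\<alpha>\<in>UNIV. \<Sum>\<beta>\<in>UNIV. fund_tensor F v \<alpha> \<beta> * v$\<alpha> * w$\<beta>))"

end

theory Submission imports Defs begin

lemma lin_exp:
  fixes L :: "real^'n \<Rightarrow> real"
  assumes "linear L"
  shows "L h = (\<Sum>i\<in>UNIV. h$i * L (axis i 1))"
proof -
  have "L h = L (\<Sum>i\<in>UNIV. h$i *s axis i 1)" by (simp add: basis_expansion)
  also have "\<dots> = (\<Sum>i\<in>UNIV. L (h$i *\<^sub>R axis i 1))"
    by (simp add: linear_sum[OF assms] scalar_mult_eq_scaleR)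
  also have "\<dots> = (\<Sum>i\<in>UNIV. h$i * L (axis i 1))"
    using linear_scale[OF assms] by simp
  finally show ?thesis .
qed

lemma fderiv_exp:
  fixes f :: "real^'n \<Rightarrow> real"
  assumes "f differentiable at x"
  shows "frechet_derivative f (at x) h = (\<Sum>i\<in>UNIV. h$i * pderiv_at i f x)"
  unfolding pderiv_at_def
  by (rule lin_exp) (use assms frechet_derivative_works has_derivative_linear in blast)

lemma fin_diff:
  assumes "finsler_norm F" "x \<noteq> 0"
  shows "F differentiable at x" "(\<lambda>y. pderiv_at i F y) differentiable at x"
proof -
  have "Ck_on 2 (- {0}) F" using assms(1) unfolding finsler_norm_def smooth_on_def by blast
  then show "F differentiable at x" "(\<lambda>y. pderiv_at i F y) differentiable at x"
    using assms(2) by (auto simp: numeral_2_eq_2)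
qed

lemma fin_hom: "finsler_norm F \<Longrightarrow> c > 0 \<Longrightarrow> F (c *\<^sub>R x) = c * F x"
  unfolding finsler_norm_def by blast

lemma fin_nonneg: "finsler_norm F \<Longrightarrow> F x \<ge> 0"
  unfolding finsler_norm_def by blast

lemma fin_pos_def: "finsler_norm F \<Longrightarrow> x \<noteq> 0 \<Longrightarrow> \<xi> \<noteq> 0 \<Longrightarrow>
   (\<Sum>\<alpha>\<in>UNIV. \<Sum>\<beta>\<in>UNIV. fund_tensor F x \<alpha> \<beta> * \<xi>$\<alpha> * \<xi>$\<beta>) > 0"
  unfolding finsler_norm_def by blast

lemma G_hasderiv:
  fixes F :: "real^'n \<Rightarrow> real"
  assumes "(F has_derivative F') (at x)"
  shows "((\<lambda>y. (F y)^2) has_derivative (\<lambda>h. 2 * F' h * F x)) (at x)"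
  using has_derivative_power[OF assms, of 2] by simp

lemma G_diff:
  assumes "finsler_norm F" "x \<noteq> 0"
  shows "(\<lambda>y. (F y)^2) differentiable at x"
  using G_hasderiv fin_diff(1)[OF assms] unfolding differentiable_def by blast

lemma pG:
  assumes "finsler_norm F" "x \<noteq> 0"
  shows "pderiv_at i (\<lambda>y. (F y)^2) x = 2 * pderiv_at i F x * F x"
proof -
  have "(F has_derivative frechet_derivative F (at x)) (at x)"
    using fin_diff(1)[OF assms] frechet_derivative_works by blast
  from frechet_derivative_at[OF G_hasderiv[OF this]] show ?thesis
    unfolding pderiv_at_def by metis
qed

lemma G_diff2:
  assumes "finsler_norm F" "x \<noteq> 0"
  shows "(\<lambda>y. pderiv_at i (\<lambda>y. (F y)^2) y) differentiable at x"
proof -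
  have "(\<lambda>y. 2 * pderiv_at i F y * F y) differentiable at x"
    using fin_diff[OF assms] by (intro differentiable_mult differentiable_const) auto
  then obtain D where D: "((\<lambda>y. 2 * pderiv_at i F y * F y) has_derivative D) (at x)"
    unfolding differentiable_def by blast
  have "((\<lambda>y. pderiv_at i (\<lambda>y. (F y)^2) y) has_derivative D) (at x)"
    by (rule has_derivative_transform_within_open[OF D, of "-{0}"])
       (use assms pG[OF assms(1)] in auto)
  then show ?thesis unfolding differentiable_def by blast
qed

lemma line_deriv:
  fixes f :: "real^'n \<Rightarrow> real"
  assumes "f differentiable at (x + t *\<^sub>R \<xi>)"
  shows "((\<lambda>s. f (x + s *\<^sub>R \<xi>)) has_field_derivative
           frechet_derivative f (at (x + t *\<^sub>R \<xi>)) \<xi>) (at t)"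
proof -
  let ?D = "frechet_derivative f (at (x + t *\<^sub>R \<xi>))"
  have fD: "(f has_derivative ?D) (at (x + t *\<^sub>R \<xi>))"
    using assms frechet_derivative_works by blast
  have lin: "linear ?D" using fD has_derivative_linear by blast
  have g: "((\<lambda>s. x + s *\<^sub>R \<xi>) has_derivative (\<lambda>h. h *\<^sub>R \<xi>)) (at t)"
    by (auto intro!: derivative_eq_intros)
  have "((\<lambda>s. f (x + s *\<^sub>R \<xi>)) has_derivative (\<lambda>h. ?D (h *\<^sub>R \<xi>))) (at t)"
    using has_derivative_compose[OF g fD] by (simp add: o_def)
  moreover have "(\<lambda>h. ?D (h *\<^sub>R \<xi>)) = (*) (?D \<xi>)"
    using linear_scale[OF lin] by (auto simp: mult.commute)
  ultimately show ?thesis unfolding has_field_derivative_def by simp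
qed

lemma G_hom: "finsler_norm F \<Longrightarrow> c > 0 \<Longrightarrow> (F (c *\<^sub>R x))^2 = c^2 * (F x)^2"
  by (simp add: fin_hom power_mult_distrib)

lemma euler:
  assumes "finsler_norm F" "x \<noteq> 0"
  shows "frechet_derivative (\<lambda>y. (F y)^2) (at x) x = 2 * (F x)^2"
proof -
  let ?G = "\<lambda>y. (F y)^2"
  have d: "?G differentiable at (0 + 1 *\<^sub>R x)" using G_diff[OF assms] by simp
  have "((\<lambda>s. ?G (0 + s *\<^sub>R x)) has_field_derivative frechet_derivative ?G (at x) x) (at 1)"
    using line_deriv[OF d] by simp
  moreover have "((\<lambda>s. ?G (0 + s *\<^sub>R x)) has_field_derivative 2 * (F x)^2) (at 1)"
  proof (rule has_field_derivative_transform_within_open[of "\<lambda>s. s^2 * (F x)^2" _ _ "{0<..}"])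
    show "((\<lambda>s. s\<^sup>2 * (F x)\<^sup>2) has_field_derivative 2 * (F x)\<^sup>2) (at 1)"
      by (auto intro!: derivative_eq_intros)
  qed (use G_hom[OF assms(1)] in auto)
  ultimately show ?thesis using DERIV_unique by blast
qed

lemma E2:
  assumes "finsler_norm F" "v \<noteq> 0"
  shows "(\<Sum>\<alpha>\<in>UNIV. v$\<alpha> * pderiv_at \<beta> (pderiv_at \<alpha> (\<lambda>y. (F y)^2)) v)
           = pderiv_at \<beta> (\<lambda>y. (F y)^2) v"
proof -
  let ?G = "\<lambda>y. (F y)^2"
  let ?D = "\<lambda>\<alpha>. frechet_derivative (pderiv_at \<alpha> ?G) (at v)"
  let ?H = "\<lambda>x. \<Sum>\<alpha>\<in>UNIV. x$\<alpha> * pderiv_at \<alpha> ?G x"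
  let ?H' = "\<lambda>h. \<Sum>\<alpha>\<in>UNIV. v$\<alpha> * ?D \<alpha> h + h$\<alpha> * pderiv_at \<alpha> ?G v"
  have Dd: "(pderiv_at \<alpha> ?G has_derivative ?D \<alpha>) (at v)" for \<alpha>
    using G_diff2[OF assms, of \<alpha>] frechet_derivative_works by (metis (no_types) eta_contract_eq)
  have nth: "((\<lambda>x. x $ \<alpha>) has_derivative (\<lambda>h. h $ \<alpha>)) (at v)" for \<alpha> :: 'a
    by (rule bounded_linear_imp_has_derivative) auto
  have hH: "(?H has_derivative ?H') (at v)"
    by (rule has_derivative_sum, rule has_derivative_mult[OF nth Dd])
  have eqH: "\<And>x. x \<in> -{0} \<Longrightarrow> ?H x = 2 * ?G x"
  proof -
    fix x :: "real^'a" assume "x \<in> -{0}"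
    then have x: "x \<noteq> 0" by auto
    show "?H x = 2 * ?G x"
      using euler[OF assms(1) x] fderiv_exp[OF G_diff[OF assms(1) x], of x] by simp
  qed
  have h1: "((\<lambda>x. 2 * ?G x) has_derivative ?H') (at v)"
    by (rule has_derivative_transform_within_open[OF hH, of "-{0}"]) (use assms eqH in auto)
  have hG: "(?G has_derivative frechet_derivative ?G (at v)) (at v)"
    using G_diff[OF assms] frechet_derivative_works by blast
  have h2: "((\<lambda>x. 2 * ?G x) has_derivative (\<lambda>h. 2 * frechet_derivative ?G (at v) h)) (at v)"
    using has_derivative_mult[OF has_derivative_const[of 2] hG] by simp
  have "?H' = (\<lambda>h. 2 * frechet_derivative ?G (at v) h)"
    using has_derivative_unique[OF h1 h2] .
  then have "?H' (axis \<beta> 1) = 2 * pderiv_at \<beta> ?G v"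
    unfolding pderiv_at_def by metis
  moreover have "?H' (axis \<beta> 1) = (\<Sum>\<alpha>\<in>UNIV. v$\<alpha> * pderiv_at \<beta> (pderiv_at \<alpha> ?G) v) + pderiv_at \<beta> ?G v"
  proof -
    have a: "(\<Sum>\<alpha>\<in>UNIV. (axis \<beta> 1 :: real^'a)$\<alpha> * pderiv_at \<alpha> ?G v) = pderiv_at \<beta> ?G v"
    proof -
      have "(\<Sum>\<alpha>\<in>UNIV. (axis \<beta> 1 :: real^'a)$\<alpha> * pderiv_at \<alpha> ?G v)
          = (\<Sum>\<alpha>\<in>UNIV. if \<alpha> = \<beta> then pderiv_at \<alpha> ?G v else 0)"
        by (rule sum.cong) (auto simp: axis_def)
      then show ?thesis by simp
    qed
    have b: "?D \<alpha> (axis \<beta> 1) = pderiv_at \<beta> (pderiv_at \<alpha> ?G) v" for \<alpha>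
      unfolding pderiv_at_def[of \<beta>] by simp
    show ?thesis using a b by (simp add: sum.distrib)
  qed
  ultimately show ?thesis by simp
qed


lemma gbar_eq:
  assumes "finsler_norm F" "v \<noteq> 0"
  shows "gbar F v w = frechet_derivative (\<lambda>y. (F y)^2) (at v) w / 2"
proof -
  let ?G = "\<lambda>y. (F y)^2"
  have "gbar F v w = (\<Sum>\<alpha>\<in>UNIV. \<Sum>\<beta>\<in>UNIV. (1/2) * w$\<beta> * (v$\<alpha> * pderiv_at \<beta> (pderiv_at \<alpha> ?G) v))"
    unfolding gbar_def fund_tensor_def using assms(2) by (simp add: algebra_simps)
  also have "\<dots> = (\<Sum>\<beta>\<in>UNIV. \<Sum>\<alpha>\<in>UNIV. (1/2) * w$\<beta> * (v$\<alpha> * pderiv_at \<beta> (pderiv_at \<alpha> ?G) v))"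
    by (rule sum.swap)
  also have "\<dots> = (\<Sum>\<beta>\<in>UNIV. (1/2) * w$\<beta> * (\<Sum>\<alpha>\<in>UNIV. v$\<alpha> * pderiv_at \<beta> (pderiv_at \<alpha> ?G) v))"
    by (simp add: sum_distrib_left)
  also have "\<dots> = (\<Sum>\<beta>\<in>UNIV. (1/2) * w$\<beta> * pderiv_at \<beta> ?G v)"
    using E2[OF assms] by simp
  also have "\<dots> = frechet_derivative ?G (at v) w / 2"
    using fderiv_exp[OF G_diff[OF assms], of w] by (simp add: sum_divide_distrib)
  finally show ?thesis .
qed

definition Qf :: "(real^'n::finite \<Rightarrow> real) \<Rightarrow> real^'n \<Rightarrow> real^'n \<Rightarrow> real" where
  "Qf F x \<xi> = (\<Sum>\<alpha>\<in>UNIV. \<Sum>\<beta>\<in>UNIV. fund_tensor F x \<alpha> \<beta> * \<xi>$\<alpha> * \<xi>$\<beta>)"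

lemma line1:
  assumes "finsler_norm F" "x + t *\<^sub>R \<xi> \<noteq> 0"
  shows "((\<lambda>s. (F (x + s *\<^sub>R \<xi>))^2) has_field_derivative
           (\<Sum>\<alpha>\<in>UNIV. \<xi>$\<alpha> * pderiv_at \<alpha> (\<lambda>y. (F y)^2) (x + t *\<^sub>R \<xi>))) (at t)"
  using line_deriv[OF G_diff[OF assms]] fderiv_exp[OF G_diff[OF assms]] by simp

lemma line2:
  assumes "finsler_norm F" "x + t *\<^sub>R \<xi> \<noteq> 0"
  shows "((\<lambda>s. (\<Sum>\<alpha>\<in>UNIV. \<xi>$\<alpha> * pderiv_at \<alpha> (\<lambda>y. (F y)^2) (x + s *\<^sub>R \<xi>))) has_field_derivative
           2 * Qf F (x + t *\<^sub>R \<xi>) \<xi>) (at t)"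
proof -
  let ?G = "\<lambda>y. (F y)^2"
  let ?y = "x + t *\<^sub>R \<xi>"
  have "((\<lambda>s. (\<Sum>\<alpha>\<in>UNIV. \<xi>$\<alpha> * pderiv_at \<alpha> ?G (x + s *\<^sub>R \<xi>))) has_field_derivative
           (\<Sum>\<alpha>\<in>UNIV. \<xi>$\<alpha> * (\<Sum>\<beta>\<in>UNIV. \<xi>$\<beta> * pderiv_at \<beta> (pderiv_at \<alpha> ?G) ?y))) (at t)"
  proof (rule DERIV_sum, rule DERIV_cmult)
    fix \<alpha>
    have d: "pderiv_at \<alpha> ?G differentiable at ?y"
      using G_diff2[OF assms, of \<alpha>] by (metis (no_types) eta_contract_eq)
    show "((\<lambda>s. pderiv_at \<alpha> ?G (x + s *\<^sub>R \<xi>)) has_field_derivative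
           (\<Sum>\<beta>\<in>UNIV. \<xi>$\<beta> * pderiv_at \<beta> (pderiv_at \<alpha> ?G) ?y)) (at t)"
      using line_deriv[OF d] fderiv_exp[OF d] by simp
  qed
  moreover have "(\<Sum>\<alpha>\<in>UNIV. \<xi>$\<alpha> * (\<Sum>\<beta>\<in>UNIV. \<xi>$\<beta> * pderiv_at \<beta> (pderiv_at \<alpha> ?G) ?y))
      = 2 * Qf F ?y \<xi>"
    unfolding Qf_def fund_tensor_def by (simp add: sum_distrib_left algebra_simps)
  ultimately show ?thesis by simp
qed


lemma fin_posF:
  assumes "finsler_norm F" "x \<noteq> 0"
  shows "F x > 0"
proof (rule ccontr)
  assume "\<not> F x > 0"
  then have F0: "F x = 0" using fin_nonneg[OF assms(1), of x] by simp
  let ?G = "\<lambda>y. (F y)^2"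
  let ?p = "\<lambda>s. (\<Sum>\<alpha>\<in>UNIV. x$\<alpha> * pderiv_at \<alpha> ?G (x + s *\<^sub>R x))"
  have ne: "x + s *\<^sub>R x \<noteq> 0" if "s \<in> {-1<..}" for s
  proof -
    have "x + s *\<^sub>R x = (1 + s) *\<^sub>R x" by (simp add: algebra_simps)
    then show ?thesis using that assms(2) by auto
  qed
  have Gz: "?G (x + s *\<^sub>R x) = 0" if "s \<in> {-1<..}" for s
  proof -
    have "x + s *\<^sub>R x = (1 + s) *\<^sub>R x" by (simp add: algebra_simps)
    then show ?thesis using that G_hom[OF assms(1), of "1+s" x] F0 by auto
  qed
  have pz: "?p s = 0" if s: "s \<in> {-1<..}" for s
  proof -
    have "((\<lambda>s. 0) has_field_derivative ?p s) (at s)"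
      by (rule has_field_derivative_transform_within_open[OF line1[OF assms(1) ne[OF s]], where S="{-1<..}"])
         (use s Gz in auto)
    then show ?thesis using DERIV_const DERIV_unique by metis
  qed
  have "((\<lambda>s. 0) has_field_derivative 2 * Qf F (x + 0 *\<^sub>R x) x) (at 0)"
    by (rule has_field_derivative_transform_within_open[OF line2[OF assms(1)], where S="{-1<..}"])
       (use pz assms(2) in auto)
  then have "2 * Qf F (x + 0 *\<^sub>R x) x = 0" using DERIV_const DERIV_unique by metis
  moreover have "Qf F x x > 0" unfolding Qf_def using fin_pos_def[OF assms(1,2,2)] .
  ultimately show False by simp
qed


lemma key:
  assumes "finsler_norm F" "v \<noteq> 0" "u \<noteq> 0" "(F u)^2 = (F v)^2"
  shows "frechet_derivative (\<lambda>y. (F y)^2) (at v) (u - v) \<le> 0"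
proof -
  let ?G = "\<lambda>y. (F y)^2"
  let ?D = "frechet_derivative ?G (at v)"
  have lin: "linear ?D"
    using G_diff[OF assms(1,2)] frechet_derivative_works has_derivative_linear by blast
  show ?thesis
  proof (cases "\<exists>t. 0 \<le> t \<and> t \<le> 1 \<and> v + t *\<^sub>R (u - v) = 0")
    case True
    then obtain t where t: "0 \<le> t" "t \<le> 1" "v + t *\<^sub>R (u - v) = 0" by blast
    have t0: "t \<noteq> 0" using t assms(2) by auto
    have "t *\<^sub>R (u - v) = - v" using t(3) by (metis add.commute add_eq_0_iff)
    then have "u - v = (- 1 / t) *\<^sub>R v"
      using t0 by (metis divide_inverse_commute mult_1 scaleR_minus1_left scaleR_scaleR
            scaleR_one divide_minus_left scaleR_minus_left eq_vector_fraction_iff)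
    moreover have "?D ((- 1 / t) *\<^sub>R v) = (- 1 / t) * ?D v"
      using linear_scale[OF lin, of "- 1 / t" v] by (simp only: real_scaleR_def)
    ultimately have "?D (u - v) = (- 1 / t) * ?D v" by simp
    also have "\<dots> = (- 1 / t) * (2 * (F v)^2)" using euler[OF assms(1,2)] by simp
    also have "\<dots> \<le> 0" using t t0 by (simp add: divide_nonpos_pos)
    finally show ?thesis .
  next
    case False
    then have ne: "v + t *\<^sub>R (u - v) \<noteq> 0" if "0 \<le> t" "t \<le> 1" for t using that by blast
    let ?\<xi> = "u - v"
    let ?p = "\<lambda>s. (\<Sum>\<alpha>\<in>UNIV. ?\<xi>$\<alpha> * pderiv_at \<alpha> ?G (v + s *\<^sub>R ?\<xi>))"
    show ?thesis
    proof (cases "u = v")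
      case True
      then show ?thesis using linear_0[OF lin] by simp
    next
      case False
      then have xi: "?\<xi> \<noteq> 0" by simp
      obtain z where z: "0 < z" "z < 1"
          "?G (v + 1 *\<^sub>R ?\<xi>) - ?G (v + 0 *\<^sub>R ?\<xi>) = (1 - 0) * ?p z"
        using MVT2[of 0 1 "\<lambda>s. ?G (v + s *\<^sub>R ?\<xi>)" ?p] line1[OF assms(1) ne] by auto
      have pz: "?p z = 0" using z(3) assms(4) by simp
      obtain d where d: "0 < d" "d < z"
          "?p z - ?p 0 = (z - 0) * (2 * Qf F (v + d *\<^sub>R ?\<xi>) ?\<xi>)"
        using MVT2[of 0 z ?p "\<lambda>s. 2 * Qf F (v + s *\<^sub>R ?\<xi>) ?\<xi>"] line2[OF assms(1) ne] z by auto
      have "Qf F (v + d *\<^sub>R ?\<xi>) ?\<xi> > 0"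
        unfolding Qf_def using fin_pos_def[OF assms(1) ne xi] d z by auto
      then have q: "(z - 0) * (2 * Qf F (v + d *\<^sub>R ?\<xi>) ?\<xi>) > 0" using z by simp
      have "?p 0 < 0" using d(3) pz q by linarith
      moreover have "?D ?\<xi> = ?p 0" using fderiv_exp[OF G_diff[OF assms(1,2)]] by simp
      ultimately show ?thesis by simp
    qed
  qed
qed


lemma dG_bound:
  assumes "finsler_norm F" "v \<noteq> 0" "w \<noteq> 0"
  shows "frechet_derivative (\<lambda>y. (F y)^2) (at v) w \<le> 2 * F v * F w"
proof -
  let ?G = "\<lambda>y. (F y)^2"
  let ?D = "frechet_derivative ?G (at v)"
  have lin: "linear ?D"
    using G_diff[OF assms(1,2)] frechet_derivative_works has_derivative_linear by blast
  have a: "F v > 0" by (rule fin_posF[OF assms(1,2)])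
  have b: "F w > 0" by (rule fin_posF[OF assms(1,3)])
  define c where "c = F v / F w"
  have c: "c > 0" using a b by (simp add: c_def)
  define u where "u = c *\<^sub>R w"
  have u0: "u \<noteq> 0" using c assms(3) by (simp add: u_def)
  have Gu: "(F u)^2 = (F v)^2"
    using G_hom[OF assms(1) c, of w] b by (simp add: u_def c_def power_divide)
  have "?D (u - v) \<le> 0" by (rule key[OF assms(1,2) u0 Gu])
  moreover have "?D (u - v) = c * ?D w - ?D v"
    using linear_diff[OF lin, of u v] linear_scale[OF lin, of c w] by (simp add: u_def)
  ultimately have "c * ?D w \<le> 2 * (F v)^2" using euler[OF assms(1,2)] by simp
  then have "F v * ?D w \<le> 2 * (F v)^2 * F w"
    using b by (simp add: c_def field_simps)
  then have "F v * ?D w \<le> F v * (2 * F v * F w)" by (simp add: power2_eq_square algebra_simps)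
  then show ?thesis using a by simp
qed

lemma gbar_bound:
  assumes "finsler_norm F"
  shows "gbar F v w \<le> F v * F w"
proof (cases "v = 0 \<or> w = 0")
  case True
  then have "gbar F v w = 0" unfolding gbar_def by auto
  then show ?thesis using fin_nonneg[OF assms] by simp
next
  case False
  then show ?thesis using gbar_eq[OF assms, of v w] dG_bound[OF assms, of v w] by simp
qed

theorem mainTheorem11:
  fixes F :: "real^'n \<Rightarrow> real" and v w :: "real^'n" and v0 w0 :: real
  assumes "finsler_norm F"
    and "v0 > 0" and "w0 > 0"
    and "v0^2 - (F v)^2 > 0" and "w0^2 - (F w)^2 > 0"
  shows "(v0 * w0 - gbar F v w)^2 - (v0^2 - (F v)^2) * (w0^2 - (F w)^2) \<ge> 0"
proof -
  define a where "a = F v"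
  define b where "b = F w"
  define g where "g = gbar F v w"
  have a0: "a \<ge> 0" and b0: "b \<ge> 0" using fin_nonneg[OF assms(1)] by (auto simp: a_def b_def)
  have g: "g \<le> a * b" using gbar_bound[OF assms(1)] by (simp add: g_def a_def b_def)
  have av: "a < v0"
    using assms(2,4) a0 unfolding a_def[symmetric] by (metis diff_gt_0_iff_gt power_less_imp_less_base less_eq_real_def)
  have bw: "b < w0"
    using assms(3,5) b0 unfolding b_def[symmetric] by (metis diff_gt_0_iff_gt power_less_imp_less_base less_eq_real_def)
  have ab: "a * b \<le> v0 * w0" using av bw a0 b0 by (intro mult_mono) auto
  have "(v0 * w0 - a * b)^2 \<le> (v0 * w0 - g)^2"
    using g ab by (intro power_mono) auto
  moreover have "(v0 * w0 - a * b)^2 - (v0^2 - a^2) * (w0^2 - b^2) = (v0 * b - a * w0)^2"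
    by (simp add: power2_eq_square algebra_simps)
  ultimately have "(v0 * w0 - g)^2 - (v0^2 - a^2) * (w0^2 - b^2) \<ge> 0"
    by (smt (verit) zero_le_power2)
  then show ?thesis by (simp add: a_def b_def g_def)
qed

end
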